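(* Let $(Q,\cdot)$ be a quasigroup. Then each of the following three identities holds in $Q$ (for all $x,y,z\in Q$) if and only if $Q$ satisfies the left alternative law $x(xy)=(xx)y$ for all $x,y\in Q$: (A13) $x(x(yz))=(xx)(yz)$; (A45) $(x(xy))z=((xx)y)z$; (C12) $x(y(yz))=x((yy)z)$.
   Context: A quasigroup is a set $Q$ with a binary operation $\cdot$ (written as juxtaposition) such that for all $a,b\in Q$ each of the equations $ax=b$ and $ya=b$ has a unique solution in $Q$. *)

theory Defs
  imports Main
begin

definition quasigroup :: "('a \<Rightarrow> 'a \<Rightarrow> 'a) \<Rightarrow> bool" where
  "quasigroup m \<longleftrightarrow> (\<forall>a b. \<exists>!x. m a x = b) \<and> (\<forall>a b. \<exists>!y. m y a = b)"

end

theory Submission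
  imports Defs
begin

lemma qg_surj: "quasigroup m \<Longrightarrow> \<exists>z. m a z = w"
  unfolding quasigroup_def by blast

lemma qg_lcancel: "quasigroup m \<Longrightarrow> m a x = m a y \<Longrightarrow> x = y"
  unfolding quasigroup_def by metis

lemma qg_rcancel: "quasigroup m \<Longrightarrow> m x a = m y a \<Longrightarrow> x = y"
  unfolding quasigroup_def by metis

theorem mainTheorem3:
  fixes m :: "'a \<Rightarrow> 'a \<Rightarrow> 'a"
  assumes "quasigroup m"
  shows "((\<forall>x y z. m x (m x (m y z)) = m (m x x) (m y z)) \<longleftrightarrow> (\<forall>x y. m x (m x y) = m (m x x) y))
       \<and> ((\<forall>x y z. m (m x (m x y)) z = m (m (m x x) y) z) \<longleftrightarrow> (\<forall>x y. m x (m x y) = m (m x x) y))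
       \<and> ((\<forall>x y z. m x (m y (m y z)) = m x (m (m y y) z)) \<longleftrightarrow> (\<forall>x y. m x (m x y) = m (m x x) y))"
proof (intro conjI iffI allI)
  fix x y
  assume h: "\<forall>x y z. m x (m x (m y z)) = m (m x x) (m y z)"
  obtain z where "m x z = y" using qg_surj[OF assms] by blast
  then show "m x (m x y) = m (m x x) y" using h by metis
next
  fix x y
  assume h: "\<forall>x y z. m (m x (m x y)) z = m (m (m x x) y) z"
  show "m x (m x y) = m (m x x) y" using h qg_rcancel[OF assms] by metis
next
  fix x y
  assume h: "\<forall>x y z. m x (m y (m y z)) = m x (m (m y y) z)"
  show "m x (m x y) = m (m x x) y" using h qg_lcancel[OF assms] by metis
qed auto

end
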